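(* Let $A$ be a finite-dimensional real algebra in which every subalgebra generated by a single element is associative, and let $(p^{[n]}(t))_{n\in\mathbb N}$, $p^{[n]}(t)=\sum_{k=0}^\infty a_k^{[n]}t^k$, be any sequence of real power series with $\sum_{k=0}^\infty|a_k^{[n]}|<\infty$ for each $n$ and $\lim_{n\to\infty}\sup\{|a_k^{[n]}|:k\ge1\}=0$. Put $p_0^{[n]}(t)=p^{[n]}(t)-a_0^{[n]}$. If $x\in A$ satisfies $\lim_{n\to\infty}x^n=0$, then $\lim_{n\to\infty}p_0^{[n]}(x)=0$, where $p_0^{[n]}(x)=\sum_{k\ge1}a_k^{[n]}x^k$.
   Context: $A$ carries the Euclidean topology of a finite-dimensional real vector space; powers $x^k$ are well defined by the one-generator associativity. The sequence $(p^{[n]})$ is arbitrary (not necessarily iterates of one series). *)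

theory Defs
  imports "HOL-Analysis.Analysis"
begin

text \<open>A (not necessarily associative, not necessarily unital) finite-dimensional real
algebra is modelled as a Euclidean space 'a together with a bilinear multiplication
mul :: 'a => 'a => 'a.\<close>

definition is_subalgebra :: "('a::real_vector \<Rightarrow> 'a \<Rightarrow> 'a) \<Rightarrow> 'a set \<Rightarrow> bool" where
  "is_subalgebra mul S \<longleftrightarrow> subspace S \<and> (\<forall>u\<in>S. \<forall>v\<in>S. mul u v \<in> S)"

definition gen_subalgebra :: "('a::real_vector \<Rightarrow> 'a \<Rightarrow> 'a) \<Rightarrow> 'a \<Rightarrow> 'a set" where
  "gen_subalgebra mul x = \<Inter> {S. is_subalgebra mul S \<and> x \<in> S}"

definition assoc_on :: "('a \<Rightarrow> 'a \<Rightarrow> 'a) \<Rightarrow> 'a set \<Rightarrow> bool" where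
  "assoc_on mul S \<longleftrightarrow> (\<forall>u\<in>S. \<forall>v\<in>S. \<forall>w\<in>S. mul (mul u v) w = mul u (mul v w))"

text \<open>Powers x^k for k >= 1 (x^1 = x, x^(k+1) = x * x^k); well defined (independent of
bracketing) under one-generator associativity. The value at k = 0 is a dummy (0) and is
never used in the statement.\<close>
fun alg_pow :: "('a::zero \<Rightarrow> 'a \<Rightarrow> 'a) \<Rightarrow> 'a \<Rightarrow> nat \<Rightarrow> 'a" where
  "alg_pow mul x 0 = 0"
| "alg_pow mul x (Suc 0) = x"
| "alg_pow mul x (Suc (Suc n)) = mul x (alg_pow mul x (Suc n))"

end

theory Submission
  imports Defs
begin

lemma pow_in:
  assumes "is_subalgebra mul S" "x \<in> S"
  shows "alg_pow mul x (Suc k) \<in> S"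
proof (induction k)
  case 0 then show ?case using assms by simp
next
  case (Suc k) then show ?case using assms by (simp add: is_subalgebra_def)
qed

lemma pow_gen: "alg_pow mul x (Suc k) \<in> gen_subalgebra mul x"
  unfolding gen_subalgebra_def using pow_in by blast

lemma pow_add:
  assumes "assoc_on mul (gen_subalgebra mul x)"
  shows "alg_pow mul x (Suc m + Suc k) = mul (alg_pow mul x (Suc m)) (alg_pow mul x (Suc k))"
proof (induction m)
  case 0 then show ?case by simp
next
  case (Suc m)
  have "alg_pow mul x (Suc (Suc m) + Suc k) = mul x (alg_pow mul x (Suc m + Suc k))" by simp
  also have "\<dots> = mul x (mul (alg_pow mul x (Suc m)) (alg_pow mul x (Suc k)))" using Suc by simp
  also have "\<dots> = mul (mul x (alg_pow mul x (Suc m))) (alg_pow mul x (Suc k))"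
    using assms pow_gen[of mul x 0] pow_gen[of mul x m] pow_gen[of mul x k]
    unfolding assoc_on_def by (metis alg_pow.simps(2))
  finally show ?case by simp
qed

lemma geo_summable:
  fixes c :: "nat \<Rightarrow> real"
  assumes c0: "\<And>j. c j \<ge> 0" and m: "m > 0" and half: "\<And>j. c (j + m) \<le> c j / 2"
    and bd: "\<And>j. c j \<le> B"
  shows "summable c"
proof -
  have key: "c j \<le> B * (1/2) ^ (j div m)" for j
  proof (induction j rule: less_induct)
    case (less j)
    show ?case
    proof (cases "j < m")
      case True then show ?thesis using bd by simp
    next
      case False
      then obtain i where i: "j = i + m" by (metis add.commute le_add_diff_inverse not_less)
      have "i < j" using m i by simp
      have d: "j div m = Suc (i div m)" using m i by simp
      have "c j \<le> c i / 2" using half i by simp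
      also have "\<dots> \<le> B * (1/2) ^ (i div m) / 2" using less.IH[OF \<open>i < j\<close>] by simp
      finally show ?thesis using d by simp
    qed
  qed
  define r :: real where "r = (1/2) powr (1 / real m)"
  have r0: "0 \<le> r" "r < 1" unfolding r_def using m
    using powr_less_mono2[of "1 / real m" "1/2" 1] by auto
  have rj: "r ^ j = (1/2) powr (real j / real m)" for j
    unfolding r_def by (simp add: powr_powr[symmetric] powr_realpow[symmetric] flip: powr_power)
      (simp add: powr_powr)
  have cmp: "(1/2::real) ^ (j div m) \<le> 2 * r ^ j" for j
  proof -
    have "real j / real m \<le> real (j div m) + 1"
    proof -
      have "real j = real (j div m) * real m + real (j mod m)"
        by (metis of_nat_add of_nat_mult div_mult_mod_eq)
      moreover have "real (j mod m) < real m" using m by simp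
      ultimately show ?thesis using m by (simp add: field_simps)
    qed
    then have "(1/2::real) powr (real (j div m) + 1) \<le> (1/2) powr (real j / real m)"
      by (intro powr_mono') auto
    moreover have "(1/2::real) powr (real (j div m) + 1) = (1/2) ^ (j div m) / 2"
      by (simp add: powr_add powr_realpow)
    ultimately show ?thesis using rj[of j] by simp
  qed
  have B0: "B \<ge> 0" using bd[of 0] c0[of 0] by simp
  show ?thesis
  proof (rule summable_comparison_test[where g = "\<lambda>j. B * (2 * r ^ j)"])
    show "\<exists>N. \<forall>n\<ge>N. norm (c n) \<le> B * (2 * r ^ n)"
    proof (intro exI allI impI)
      fix n :: nat
      have "c n \<le> B * (2 * r ^ n)"
        using key[of n] mult_left_mono[OF cmp[of n] B0] by linarith
      then show "norm (c n) \<le> B * (2 * r ^ n)" using c0[of n] by simp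
    qed
    show "summable (\<lambda>j. B * (2 * r ^ j))"
      using r0 by (intro summable_mult summable_geometric) auto
  qed
qed

theorem lemma1:
  fixes mul :: "'a::euclidean_space \<Rightarrow> 'a \<Rightarrow> 'a"
    and a :: "nat \<Rightarrow> nat \<Rightarrow> real"
    and x :: 'a
  assumes bil: "bilinear mul"
    and pa: "\<And>y. assoc_on mul (gen_subalgebra mul y)"
    and abs_summ: "\<And>n. summable (\<lambda>k. \<bar>a n k\<bar>)"
    and sup_lim: "(\<lambda>n. SUP k\<in>{1..}. \<bar>a n k\<bar>) \<longlonglongrightarrow> 0"
    and xlim: "(\<lambda>n. alg_pow mul x n) \<longlonglongrightarrow> 0"
  shows "(\<lambda>n. \<Sum>k. a n (Suc k) *\<^sub>R alg_pow mul x (Suc k)) \<longlonglongrightarrow> 0"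
proof -
  obtain K where K: "K > 0" "\<And>u v. norm (mul u v) \<le> norm u * norm v * K"
    using bounded_bilinear.pos_bounded[OF bil[unfolded bilinear_conv_bounded_bilinear]] by blast
  define c where "c j = norm (alg_pow mul x (Suc j))" for j
  have "eventually (\<lambda>n. norm (alg_pow mul x n) < 1 / (2 * K)) sequentially"
    using xlim K(1) by (simp add: tendsto_iff dist_norm)
  then obtain N where N: "\<And>n. n \<ge> N \<Longrightarrow> norm (alg_pow mul x n) < 1 / (2 * K)"
    by (auto simp: eventually_sequentially)
  have NK: "norm (alg_pow mul x (Suc N)) * K \<le> 1/2"
    using N[of "Suc N"] K(1) by (simp add: field_simps)
  have half: "c (j + Suc N) \<le> c j / 2" for j
  proof -
    have "alg_pow mul x (Suc (j + Suc N)) = mul (alg_pow mul x (Suc N)) (alg_pow mul x (Suc j))"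
      using pow_add[OF pa, of x N j] by (simp add: add.commute)
    then have "c (j + Suc N) \<le> norm (alg_pow mul x (Suc N)) * c j * K"
      using K(2) unfolding c_def by metis
    also have "\<dots> = (norm (alg_pow mul x (Suc N)) * K) * c j" by simp
    also have "\<dots> \<le> (1/2) * c j" by (rule mult_right_mono[OF NK]) (simp add: c_def)
    finally show ?thesis by simp
  qed
  have "bounded (range (\<lambda>n. alg_pow mul x n))"
    using xlim by (rule convergent_imp_bounded)
  then obtain B where B: "\<And>n. norm (alg_pow mul x n) \<le> B"
    by (auto simp: bounded_iff)
  have csum: "summable c"
    by (rule geo_summable[where m = "Suc N" and B = B]) (use half in \<open>auto simp: c_def B\<close>)
  define T where "T = suminf c"
  define S where "S n = (SUP k\<in>{1..}. \<bar>a n k\<bar>)" for n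
  have aS: "\<bar>a n (Suc k)\<bar> \<le> S n" for n k
  proof -
    have "bdd_above ((\<lambda>k. \<bar>a n k\<bar>) ` {1..})"
    proof (rule bdd_aboveI2)
      fix k show "\<bar>a n k\<bar> \<le> (\<Sum>k. \<bar>a n k\<bar>)"
        using sum_le_suminf[OF abs_summ[of n], of "{k}"] by simp
    qed
    then show ?thesis unfolding S_def by (intro cSUP_upper) auto
  qed
  have S0: "S n \<ge> 0" for n using aS[of n 0] by simp
  have bound: "norm (\<Sum>k. a n (Suc k) *\<^sub>R alg_pow mul x (Suc k)) \<le> S n * T" for n
  proof -
    have le: "norm (a n (Suc k) *\<^sub>R alg_pow mul x (Suc k)) \<le> S n * c k" for k
      using mult_right_mono[OF aS[of n k], of "c k"] by (simp add: c_def)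
    have s2: "summable (\<lambda>k. S n * c k)" using csum by (rule summable_mult)
    have s1: "summable (\<lambda>k. norm (a n (Suc k) *\<^sub>R alg_pow mul x (Suc k)))"
      by (rule summable_comparison_test[OF _ s2]) (use le in auto)
    have "norm (\<Sum>k. a n (Suc k) *\<^sub>R alg_pow mul x (Suc k))
        \<le> (\<Sum>k. norm (a n (Suc k) *\<^sub>R alg_pow mul x (Suc k)))"
      by (rule summable_norm[OF s1])
    also have "\<dots> \<le> (\<Sum>k. S n * c k)" by (rule suminf_le[OF le s1 s2])
    also have "\<dots> = S n * T" unfolding T_def using suminf_mult[OF csum, of "S n"] by simp
    finally show ?thesis .
  qed
  have "(\<lambda>n. S n * T) \<longlonglongrightarrow> 0"
    using sup_lim unfolding S_def[symmetric] by (rule tendsto_mult_left_zero)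
  then show ?thesis
    by (rule Lim_null_comparison[rotated]) (use bound in auto)
qed

end
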